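(* Let $B(x)=\frac{x}{1+x^2}$, $B_0(x)=x$ and $B_j(x)=B(B_{j-1}(x))$ for $j\ge1$ (rational functions of $x$). For every $j\ge0$, the equation $B_j(x)=-1$ has at least one root $x\in\mathbb{C}$, and this root is not a root of $B_{j'}(x)=-1$ for any $j'\neq j$. *)

theory Defs
  imports Complex_Main
begin

definition Bmap :: "complex \<Rightarrow> complex" where
  "Bmap x = x / (1 + x\<^sup>2)"

definition Bit :: "nat \<Rightarrow> complex \<Rightarrow> complex" where
  "Bit j = (Bmap ^^ j)"

end

theory Submission
  imports Defs
begin

lemma Bmap_surj:
  assumes "w \<noteq> 0"
  shows "\<exists>x. Bmap x = w"
proof -
  define s where "s = csqrt (1 - 4 * w^2)"
  have s2: "s^2 = 1 - 4 * w^2" unfolding s_def by simp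
  define x where "x = (1 + s) / (2 * w)"
  have eq: "w * x^2 - x + w = 0"
  proof -
    have "w * x^2 - x + w = (s^2 - 1 + 4*w^2)/(4*w)"
      unfolding x_def using assms by (simp add: field_simps power2_eq_square)
    then show ?thesis using s2 by simp
  qed
  have "1 + x^2 \<noteq> 0"
  proof
    assume h: "1 + x^2 = 0"
    have "x = w * (1 + x^2)" using eq by (simp add: algebra_simps)
    then have "x = 0" using h by (metis mult_zero_right)
    then show False using h by simp
  qed
  moreover have "x = w * (1 + x^2)" using eq by (simp add: algebra_simps)
  ultimately have "Bmap x = w" unfolding Bmap_def by (metis nonzero_mult_div_cancel_right)
  then show ?thesis by blast
qed

lemma Bit_surj: "w \<noteq> 0 \<Longrightarrow> \<exists>x. Bit n x = w"
proof (induction n arbitrary: w)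
  case 0
  then show ?case by (simp add: Bit_def)
next
  case (Suc n)
  obtain v where v: "Bmap v = w" using Bmap_surj Suc.prems by blast
  have "v \<noteq> 0" using v Suc.prems by (auto simp: Bmap_def)
  then obtain x where "Bit n x = v" using Suc.IH by blast
  then have "Bit (Suc n) x = w" using v by (simp add: Bit_def)
  then show ?case by blast
qed

lemma Bit_add: "Bit (a + b) x = Bit a (Bit b x)"
  by (simp add: Bit_def funpow_add)

lemma orbit: "\<exists>r::real. -1/2 \<le> r \<and> r < 0 \<and> Bit n (-1/2) = of_real r"
proof (induction n)
  case 0
  then show ?case by (rule exI[of _ "-1/2"]) (simp add: Bit_def)
next
  case (Suc n)
  then obtain r :: real where r: "-1/2 \<le> r" "r < 0" "Bit n (-1/2) = of_real r" by blast
  have b: "Bmap (of_real r) = of_real (r / (1 + r^2))"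
    unfolding Bmap_def by simp
  have p: "1 + r^2 \<ge> 1" by simp
  have "0 < 1 + r^2" by (simp add: add_pos_nonneg)
  then have "r / (1 + r^2) < 0" using r by (simp add: divide_neg_pos)
  moreover have "r \<le> r / (1 + r^2)"
  proof -
    have "r * (1 + r^2) \<le> r * 1" using mult_left_mono_neg[OF p] r by simp
    then show ?thesis using \<open>0 < 1 + r^2\<close> by (simp add: pos_le_divide_eq)
  qed
  ultimately show ?case using r b
    by (intro exI[of _ "r / (1 + r^2)"]) (simp add: Bit_def)
qed

lemma Bit_neg1: "m \<ge> 1 \<Longrightarrow> Bit m (-1) \<noteq> -1"
proof -
  assume "m \<ge> 1"
  then obtain k where m: "m = k + 1" by (metis add.commute le_Suc_ex)
  have "Bit 1 (-1) = -1/2" by (simp add: Bit_def Bmap_def)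
  moreover have "Bit m (-1) = Bit k (Bit 1 (-1))" unfolding m by (rule Bit_add)
  ultimately have "Bit m (-1) = Bit k (-1/2)" by simp
  obtain r :: real where a: "-1/2 \<le> r" "Bit k (-1/2) = of_real r"
    using orbit by blast
  show ?thesis
  proof
    assume "Bit m (-1) = -1"
    then have "of_real r = (of_real (-1) :: complex)" using a \<open>Bit m (-1) = Bit k (-1/2)\<close> by simp
    then have "r = -1" using of_real_eq_iff by blast
    then show False using a by simp
  qed
qed

theorem proposition2p6:
  fixes j :: nat
  shows "\<exists>x::complex. Bit j x = -1 \<and> (\<forall>j'. j' \<noteq> j \<longrightarrow> Bit j' x \<noteq> -1)"
proof -
  obtain x where x: "Bit j x = -1" using Bit_surj[of "-1" j] by auto
  have "Bit j' x \<noteq> -1" if "j' \<noteq> j" for j'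
  proof (cases "j' > j")
    case True
    then have "Bit j' x = Bit (j' - j) (Bit j x)" by (simp add: Bit_add[symmetric])
    then show ?thesis using x Bit_neg1[of "j' - j"] True by simp
  next
    case False
    then have lt: "j' < j" using that by simp
    show ?thesis
    proof
      assume h: "Bit j' x = -1"
      have "Bit j x = Bit (j - j') (Bit j' x)" using lt by (simp add: Bit_add[symmetric])
      moreover have "1 \<le> j - j'" using lt by simp
      ultimately show False using x h Bit_neg1[of "j - j'"] by simp
    qed
  qed
  then show ?thesis using x by blast
qed

end
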